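(* A net $A:\mathcal{V}(X)\to\mathbf{CStar}_{inc}$ is local if and only if for every pair $(O_1,O_2)$ of spacelike separated elements of $\mathcal{V}(X)$ the monotone map $$r: C(A(O_1\vee O_2))\to C(A(O_1))\times C(A(O_2)),\qquad C\mapsto (C\cap A(O_1),\,C\cap A(O_2))$$ has a left adjoint.
   Context: $X$ is a Lorentzian manifold. Two subsets are spacelike separated if no timelike or lightlike curve joins any of their points. For an open $O$, $O'$ is the interior of the set of points spacelike separated from $O$; $\mathcal{V}(X)$ is the poset of connected opens with $O''=O$ under inclusion, and $O_1\vee O_2$ their join in $\mathcal{V}(X)$. All C*-algebras are unital; $\mathbf{CStar}_{inc}$ has injective *-homomorphisms as arrows. A net is a functor $A:\mathcal{V}(X)\to\mathbf{CStar}_{inc}$, all $A(O)$ viewed as subalgebras of $A(X)$; it is local if for spacelike separated $O_1,O_2$, $A(O_1)$ and $A(O_2)$ commute elementwise in $A(O_1\vee O_2)$. $C(B)$ is the poset of commutative C*-subalgebras of $B$. *)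

theory Defs
  imports "HOL-Analysis.Analysis"
begin

class cstar_algebra = banach + real_normed_algebra_1 +
  fixes scaleC :: "complex \<Rightarrow> 'a \<Rightarrow> 'a"
    and cstar :: "'a \<Rightarrow> 'a"
  assumes scaleC_scaleR: "scaleC (complex_of_real r) x = scaleR r x"
    and scaleC_add_right: "scaleC a (x + y) = scaleC a x + scaleC a y"
    and scaleC_add_left: "scaleC (a + b) x = scaleC a x + scaleC b x"
    and scaleC_scaleC: "scaleC a (scaleC b x) = scaleC (a * b) x"
    and scaleC_one: "scaleC 1 x = x"
    and norm_scaleC: "norm (scaleC a x) = cmod a * norm x"
    and mult_scaleC_left: "scaleC a x * y = scaleC a (x * y)"
    and mult_scaleC_right: "x * scaleC a y = scaleC a (x * y)"
    and cstar_cstar: "cstar (cstar x) = x"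
    and cstar_add: "cstar (x + y) = cstar x + cstar y"
    and cstar_mult: "cstar (x * y) = cstar y * cstar x"
    and cstar_scaleC: "cstar (scaleC a x) = scaleC (cnj a) (cstar x)"
    and cstar_identity: "norm (cstar x * x) = norm x ^ 2"

definition cstar_subalg :: "'a::cstar_algebra set \<Rightarrow> bool" where
  "cstar_subalg S \<longleftrightarrow> 1 \<in> S \<and>
     (\<forall>x\<in>S. \<forall>y\<in>S. x + y \<in> S \<and> x * y \<in> S) \<and>
     (\<forall>a. \<forall>x\<in>S. scaleC a x \<in> S) \<and>
     (\<forall>x\<in>S. cstar x \<in> S) \<and> closed S"

definition comm_subalgs :: "'a::cstar_algebra set \<Rightarrow> 'a set set" where
  "comm_subalgs B = {C. cstar_subalg C \<and> C \<subseteq> B \<and> (\<forall>x\<in>C. \<forall>y\<in>C. x * y = y * x)}"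

text \<open>\<open>causal x y\<close>: some timelike or lightlike curve joins x and y.\<close>
definition spacelike_sep :: "('p \<Rightarrow> 'p \<Rightarrow> bool) \<Rightarrow> 'p set \<Rightarrow> 'p set \<Rightarrow> bool" where
  "spacelike_sep causal S T \<longleftrightarrow> (\<forall>x\<in>S. \<forall>y\<in>T. \<not> causal x y \<and> \<not> causal y x)"

definition causal_compl :: "('p::topological_space \<Rightarrow> 'p \<Rightarrow> bool) \<Rightarrow> 'p set \<Rightarrow> 'p set" where
  "causal_compl causal U = interior {x. spacelike_sep causal {x} U}"

definition V_opens :: "('p::topological_space \<Rightarrow> 'p \<Rightarrow> bool) \<Rightarrow> 'p set set" where
  "V_opens causal = {U. open U \<and> connected U \<and>
      causal_compl causal (causal_compl causal U) = U}"

definition is_join :: "'p set set \<Rightarrow> 'p set \<Rightarrow> 'p set \<Rightarrow> 'p set \<Rightarrow> bool" where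
  "is_join V U1 U2 J \<longleftrightarrow> J \<in> V \<and> U1 \<subseteq> J \<and> U2 \<subseteq> J \<and>
      (\<forall>K\<in>V. U1 \<subseteq> K \<and> U2 \<subseteq> K \<longrightarrow> J \<subseteq> K)"

text \<open>A net V(X) \<rightarrow> CStar_inc, all algebras viewed as unital C*-subalgebras of the
  ambient algebra, arrows being inclusions.\<close>
definition is_net :: "('p::topological_space \<Rightarrow> 'p \<Rightarrow> bool) \<Rightarrow> ('p set \<Rightarrow> 'a::cstar_algebra set) \<Rightarrow> bool" where
  "is_net causal A \<longleftrightarrow> (\<forall>U\<in>V_opens causal. cstar_subalg (A U)) \<and>
     (\<forall>U1\<in>V_opens causal. \<forall>U2\<in>V_opens causal. U1 \<subseteq> U2 \<longrightarrow> A U1 \<subseteq> A U2)"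

definition is_local_net :: "('p::topological_space \<Rightarrow> 'p \<Rightarrow> bool) \<Rightarrow> ('p set \<Rightarrow> 'a::cstar_algebra set) \<Rightarrow> bool" where
  "is_local_net causal A \<longleftrightarrow>
     (\<forall>U1\<in>V_opens causal. \<forall>U2\<in>V_opens causal. \<forall>J.
        spacelike_sep causal U1 U2 \<and> is_join (V_opens causal) U1 U2 J \<longrightarrow>
        (\<forall>a\<in>A U1. \<forall>b\<in>A U2. a * b = b * a))"

definition has_left_adjoint ::
  "'x set \<Rightarrow> ('x \<Rightarrow> 'x \<Rightarrow> bool) \<Rightarrow> 'y set \<Rightarrow> ('y \<Rightarrow> 'y \<Rightarrow> bool) \<Rightarrow> ('y \<Rightarrow> 'x) \<Rightarrow> bool" where
  "has_left_adjoint P leP Q leQ r \<longleftrightarrow> (\<exists>l.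
      (\<forall>x\<in>P. l x \<in> Q) \<and>
      (\<forall>x\<in>P. \<forall>x'\<in>P. leP x x' \<longrightarrow> leQ (l x) (l x')) \<and>
      (\<forall>x\<in>P. \<forall>y\<in>Q. leQ (l x) y \<longleftrightarrow> leP x (r y)))"

definition prod_le :: "'a set \<times> 'b set \<Rightarrow> 'a set \<times> 'b set \<Rightarrow> bool" where
  "prod_le p q \<longleftrightarrow> fst p \<subseteq> fst q \<and> snd p \<subseteq> snd q"

end

theory Submission
  imports Defs
begin

definition commut :: "'a::cstar_algebra set \<Rightarrow> 'a set" where
  "commut S = {x. \<forall>s\<in>S. x * s = s * x}"

lemma scaleC_zero_left: "scaleC 0 (x::'a::cstar_algebra) = 0"
  using scaleC_scaleR[of 0 x] by simp

lemma cstar_zero: "cstar (0::'a::cstar_algebra) = 0"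
proof -
  have "cstar (0::'a) = cstar (0 + 0)" by simp
  also have "\<dots> = cstar 0 + cstar 0" by (rule cstar_add)
  finally show ?thesis by simp
qed

lemma closed_commut: "closed (commut (S::'a::cstar_algebra set))"
proof -
  have "commut S = (\<Inter>s\<in>S. {x. x * s = s * x})" unfolding commut_def by auto
  moreover have "closed {x::'a. x * s = s * x}" for s
    by (rule closed_Collect_eq) (auto intro: continuous_intros)
  ultimately show ?thesis by auto
qed

lemma commut_subalg:
  assumes "\<forall>s\<in>S. cstar s \<in> S"
  shows "cstar_subalg (commut (S::'a::cstar_algebra set))"
  unfolding cstar_subalg_def
proof (intro conjI)
  show "1 \<in> commut S" unfolding commut_def by simp
  show "\<forall>x\<in>commut S. \<forall>y\<in>commut S. x + y \<in> commut S \<and> x * y \<in> commut S"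
    unfolding commut_def by (auto simp: distrib_left distrib_right mult.assoc)
      (metis mult.assoc)
  show "\<forall>a. \<forall>x\<in>commut S. scaleC a x \<in> commut S"
    unfolding commut_def by (auto simp: mult_scaleC_left mult_scaleC_right)
  show "\<forall>x\<in>commut S. cstar x \<in> commut S"
    unfolding commut_def
  proof (intro ballI CollectI)
    fix x s assume x: "x \<in> {x. \<forall>s\<in>S. x * s = s * x}" and s: "s \<in> S"
    have "x * cstar s = cstar s * x" using x assms s by auto
    hence "cstar (x * cstar s) = cstar (cstar s * x)" by simp
    thus "cstar x * s = s * cstar x" by (simp add: cstar_mult cstar_cstar)
  qed
  show "closed (commut S)" by (rule closed_commut)
qed

lemma subalg_Int: "cstar_subalg A \<Longrightarrow> cstar_subalg B \<Longrightarrow> cstar_subalg (A \<inter> B)"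
  unfolding cstar_subalg_def by auto

lemma subalg_Inter: "F \<noteq> {} \<Longrightarrow> \<forall>D\<in>F. cstar_subalg D \<Longrightarrow> cstar_subalg (\<Inter>F)"
  unfolding cstar_subalg_def by (auto intro!: closed_Inter)

lemma dcomm:
  assumes "\<forall>s\<in>S. cstar s \<in> S" and "\<forall>x\<in>S. \<forall>y\<in>S. x * y = y * (x::'a::cstar_algebra)"
  shows "cstar_subalg (commut (commut S))" "S \<subseteq> commut (commut S)"
    "\<forall>x\<in>commut (commut S). \<forall>y\<in>commut (commut S). x * y = y * x"
proof -
  have c1: "cstar_subalg (commut S)" using commut_subalg assms(1) by blast
  show "cstar_subalg (commut (commut S))"
    by (rule commut_subalg) (use c1 in \<open>simp add: cstar_subalg_def\<close>)
  show S2: "S \<subseteq> commut (commut S)" unfolding commut_def by auto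
  have S1: "S \<subseteq> commut S" using assms(2) unfolding commut_def by auto
  have "commut (commut S) \<subseteq> commut S" using S1 unfolding commut_def by auto
  then show "\<forall>x\<in>commut (commut S). \<forall>y\<in>commut (commut S). x * y = y * x"
    unfolding commut_def by blast
qed

lemma selfadj_decomp:
  fixes a :: "'a::cstar_algebra"
  defines "h \<equiv> scaleC (1/2) a + scaleC (1/2) (cstar a)"
    and "k \<equiv> scaleC (-\<i>/2) a + scaleC (\<i>/2) (cstar a)"
  shows "cstar h = h" "cstar k = k" "a = h + scaleC \<i> k"
proof -
  show "cstar h = h" unfolding h_def by (simp add: cstar_add cstar_scaleC cstar_cstar add.commute)
  show "cstar k = k" unfolding k_def by (simp add: cstar_add cstar_scaleC cstar_cstar add.commute)
  have "h + scaleC \<i> k = (scaleC (1/2) a + scaleC (1/2) a) + (scaleC (1/2) (cstar a) + scaleC (-1/2) (cstar a))"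
    unfolding h_def k_def by (simp add: scaleC_add_right scaleC_scaleC algebra_simps)
  also have "\<dots> = a"
    by (simp only: scaleC_add_left[symmetric]) (simp add: scaleC_one scaleC_zero_left)
  finally show "a = h + scaleC \<i> k" by simp
qed

lemma comm_from_selfadj:
  fixes a b :: "'a::cstar_algebra"
  assumes B1: "cstar_subalg B1" and B2: "cstar_subalg B2" and a: "a \<in> B1" and b: "b \<in> B2"
    and H: "\<And>x y. x \<in> B1 \<Longrightarrow> y \<in> B2 \<Longrightarrow> cstar x = x \<Longrightarrow> cstar y = y \<Longrightarrow> x * y = y * x"
  shows "a * b = b * a"
proof -
  define h1 where "h1 = scaleC (1/2) a + scaleC (1/2) (cstar a)"
  define k1 where "k1 = scaleC (-\<i>/2) a + scaleC (\<i>/2) (cstar a)"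
  define h2 where "h2 = scaleC (1/2) b + scaleC (1/2) (cstar b)"
  define k2 where "k2 = scaleC (-\<i>/2) b + scaleC (\<i>/2) (cstar b)"
  note d1 = selfadj_decomp[of a, folded h1_def k1_def]
  note d2 = selfadj_decomp[of b, folded h2_def k2_def]
  have m1: "h1 \<in> B1" "k1 \<in> B1" using B1 a unfolding h1_def k1_def cstar_subalg_def by auto
  have m2: "h2 \<in> B2" "k2 \<in> B2" using B2 b unfolding h2_def k2_def cstar_subalg_def by auto
  have c: "h1 * h2 = h2 * h1" "h1 * k2 = k2 * h1" "k1 * h2 = h2 * k1" "k1 * k2 = k2 * k1"
    using H m1 m2 d1 d2 by auto
  have "a * b = (h1 + scaleC \<i> k1) * (h2 + scaleC \<i> k2)" using d1 d2 by simp
  also have "\<dots> = (h2 + scaleC \<i> k2) * (h1 + scaleC \<i> k1)"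
    by (simp add: distrib_left distrib_right mult_scaleC_left mult_scaleC_right c add_ac scaleC_add_right)
  also have "\<dots> = b * a" using d1 d2 by simp
  finally show ?thesis .
qed

theorem mainTheorem12:
  fixes causal :: "'p::topological_space \<Rightarrow> 'p \<Rightarrow> bool"
    and A :: "'p set \<Rightarrow> 'a::cstar_algebra set"
  assumes "is_net causal A"
  shows "is_local_net causal A \<longleftrightarrow>
    (\<forall>U1\<in>V_opens causal. \<forall>U2\<in>V_opens causal. \<forall>J.
       spacelike_sep causal U1 U2 \<and> is_join (V_opens causal) U1 U2 J \<longrightarrow>
       has_left_adjoint (comm_subalgs (A U1) \<times> comm_subalgs (A U2)) prod_le
         (comm_subalgs (A J)) (\<subseteq>) (\<lambda>C. (C \<inter> A U1, C \<inter> A U2)))"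
proof
  assume loc: "is_local_net causal A"
  show "\<forall>U1\<in>V_opens causal. \<forall>U2\<in>V_opens causal. \<forall>J.
       spacelike_sep causal U1 U2 \<and> is_join (V_opens causal) U1 U2 J \<longrightarrow>
       has_left_adjoint (comm_subalgs (A U1) \<times> comm_subalgs (A U2)) prod_le
         (comm_subalgs (A J)) (\<subseteq>) (\<lambda>C. (C \<inter> A U1, C \<inter> A U2))"
  proof (intro ballI allI impI)
    fix U1 U2 J
    assume U1: "U1 \<in> V_opens causal" and U2: "U2 \<in> V_opens causal"
      and H: "spacelike_sep causal U1 U2 \<and> is_join (V_opens causal) U1 U2 J"
    have com: "\<forall>a\<in>A U1. \<forall>b\<in>A U2. a * b = b * a"
      using loc U1 U2 H unfolding is_local_net_def by blast
    have JV: "J \<in> V_opens causal" "U1 \<subseteq> J" "U2 \<subseteq> J" using H unfolding is_join_def by auto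
    have sub1: "A U1 \<subseteq> A J" and sub2: "A U2 \<subseteq> A J"
      using assms JV U1 U2 unfolding is_net_def by auto
    have AJ: "cstar_subalg (A J)" using assms JV unfolding is_net_def by auto
    define l where "l = (\<lambda>p. \<Inter>{D \<in> comm_subalgs (A J). fst p \<union> snd p \<subseteq> D})"
    have fam: "commut (commut (fst p \<union> snd p)) \<inter> A J \<in> {D \<in> comm_subalgs (A J). fst p \<union> snd p \<subseteq> D}"
      if p: "p \<in> comm_subalgs (A U1) \<times> comm_subalgs (A U2)" for p
    proof -
      let ?S = "fst p \<union> snd p"
      have f1: "fst p \<in> comm_subalgs (A U1)" and f2: "snd p \<in> comm_subalgs (A U2)" using p by auto
      have st: "\<forall>s\<in>?S. cstar s \<in> ?S" using f1 f2 unfolding comm_subalgs_def cstar_subalg_def by auto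
      have cm: "\<forall>x\<in>?S. \<forall>y\<in>?S. x * y = y * x"
        using f1 f2 com unfolding comm_subalgs_def by auto (metis subsetD)+
      have SJ: "?S \<subseteq> A J" using f1 f2 sub1 sub2 unfolding comm_subalgs_def by auto
      note dc = dcomm[OF st cm]
      show ?thesis unfolding comm_subalgs_def using dc SJ subalg_Int[OF dc(1) AJ] by auto
    qed
    have lin: "l p \<in> comm_subalgs (A J)" and lS: "fst p \<union> snd p \<subseteq> l p"
      if p: "p \<in> comm_subalgs (A U1) \<times> comm_subalgs (A U2)" for p
    proof -
      let ?F = "{D \<in> comm_subalgs (A J). fst p \<union> snd p \<subseteq> D}"
      have ne: "?F \<noteq> {}" using fam[OF p] by blast
      have "cstar_subalg (\<Inter>?F)" by (rule subalg_Inter[OF ne]) (auto simp: comm_subalgs_def)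
      moreover have "\<Inter>?F \<subseteq> commut (commut (fst p \<union> snd p)) \<inter> A J" using fam[OF p] by blast
      moreover have "\<forall>x\<in>commut (commut (fst p \<union> snd p)) \<inter> A J. \<forall>y\<in>commut (commut (fst p \<union> snd p)) \<inter> A J. x * y = y * x"
        using fam[OF p] by (simp add: comm_subalgs_def)
      moreover have "\<Inter>?F \<subseteq> A J" using fam[OF p] by blast
      ultimately show "l p \<in> comm_subalgs (A J)" unfolding l_def comm_subalgs_def
        by (simp only: mem_Collect_eq) (meson subsetD)
      show "fst p \<union> snd p \<subseteq> l p" unfolding l_def by blast
    qed
    show "has_left_adjoint (comm_subalgs (A U1) \<times> comm_subalgs (A U2)) prod_le
         (comm_subalgs (A J)) (\<subseteq>) (\<lambda>C. (C \<inter> A U1, C \<inter> A U2))"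
      unfolding has_left_adjoint_def
    proof (intro exI[of _ l] conjI ballI impI)
      fix x assume "x \<in> comm_subalgs (A U1) \<times> comm_subalgs (A U2)"
      thus "l x \<in> comm_subalgs (A J)" by (rule lin)
    next
      fix x x' :: "'a set \<times> 'a set" assume "prod_le x x'"
      thus "l x \<subseteq> l x'" unfolding l_def prod_le_def by blast
    next
      fix x y assume x: "x \<in> comm_subalgs (A U1) \<times> comm_subalgs (A U2)" and y: "y \<in> comm_subalgs (A J)"
      have f1: "fst x \<subseteq> A U1" and f2: "snd x \<subseteq> A U2" using x unfolding comm_subalgs_def by auto
      show "(l x \<subseteq> y) = prod_le x (y \<inter> A U1, y \<inter> A U2)"
      proof
        assume "l x \<subseteq> y" thus "prod_le x (y \<inter> A U1, y \<inter> A U2)"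
          using lS[OF x] f1 f2 unfolding prod_le_def by auto
      next
        assume "prod_le x (y \<inter> A U1, y \<inter> A U2)"
        hence "fst x \<union> snd x \<subseteq> y" unfolding prod_le_def by auto
        thus "l x \<subseteq> y" unfolding l_def using y by blast
      qed
    qed
  qed
next
  assume adj: "\<forall>U1\<in>V_opens causal. \<forall>U2\<in>V_opens causal. \<forall>J.
       spacelike_sep causal U1 U2 \<and> is_join (V_opens causal) U1 U2 J \<longrightarrow>
       has_left_adjoint (comm_subalgs (A U1) \<times> comm_subalgs (A U2)) prod_le
         (comm_subalgs (A J)) (\<subseteq>) (\<lambda>C. (C \<inter> A U1, C \<inter> A U2))"
  show "is_local_net causal A"
    unfolding is_local_net_def
  proof (intro ballI allI impI)
    fix U1 U2 J a b
    assume U1: "U1 \<in> V_opens causal" and U2: "U2 \<in> V_opens causal"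
      and H: "spacelike_sep causal U1 U2 \<and> is_join (V_opens causal) U1 U2 J"
      and a: "a \<in> A U1" and b: "b \<in> A U2"
    have "has_left_adjoint (comm_subalgs (A U1) \<times> comm_subalgs (A U2)) prod_le
         (comm_subalgs (A J)) (\<subseteq>) (\<lambda>C. (C \<inter> A U1, C \<inter> A U2))"
      using adj U1 U2 H by blast
    then obtain l where lQ: "\<forall>x\<in>comm_subalgs (A U1) \<times> comm_subalgs (A U2). l x \<in> comm_subalgs (A J)"
      and ladj: "\<forall>x\<in>comm_subalgs (A U1) \<times> comm_subalgs (A U2). \<forall>y\<in>comm_subalgs (A J).
          (l x \<subseteq> y) = prod_le x (y \<inter> A U1, y \<inter> A U2)"
      unfolding has_left_adjoint_def by blast
    have B1: "cstar_subalg (A U1)" and B2: "cstar_subalg (A U2)" using assms U1 U2 unfolding is_net_def by auto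
    have single: "commut (commut {h}) \<inter> B \<in> comm_subalgs B" "h \<in> commut (commut {h}) \<inter> B"
      if B: "cstar_subalg B" and h: "h \<in> B" "cstar h = h" for B h
    proof -
      have st: "\<forall>s\<in>{h}. cstar s \<in> {h}" using h by auto
      have cm: "\<forall>x\<in>{h}. \<forall>y\<in>{h}. x * y = y * x" by auto
      note dc = dcomm[OF st cm]
      show "commut (commut {h}) \<inter> B \<in> comm_subalgs B"
        unfolding comm_subalgs_def using dc subalg_Int[OF dc(1) B] by auto
      show "h \<in> commut (commut {h}) \<inter> B" using dc h by auto
    qed
    show "a * b = b * a"
    proof (rule comm_from_selfadj[OF B1 B2 a b])
      fix x y assume x: "x \<in> A U1" and y: "y \<in> A U2" and sx: "cstar x = x" and sy: "cstar y = y"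
      define p where "p = (commut (commut {x}) \<inter> A U1, commut (commut {y}) \<inter> A U2)"
      have p: "p \<in> comm_subalgs (A U1) \<times> comm_subalgs (A U2)"
        unfolding p_def using single(1)[OF B1 x sx] single(1)[OF B2 y sy] by auto
      have lp: "l p \<in> comm_subalgs (A J)" using lQ p by blast
      have "prod_le p (l p \<inter> A U1, l p \<inter> A U2)" using ladj p lp by blast
      hence "x \<in> l p" "y \<in> l p"
        unfolding prod_le_def p_def using single(2)[OF B1 x sx] single(2)[OF B2 y sy] by auto
      thus "x * y = y * x" using lp unfolding comm_subalgs_def by blast
    qed
  qed
qed

end
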